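(* Let $(M^n,g)$ be a Riemannian manifold with Levi-Civita connection $\nabla$. Suppose either (i) $M$ is nearly conformally symmetric, i.e. $$\nabla_aR_{bc} - \nabla_b R_{ac} = \frac{1}{2(n-1)}[g_{bc}\nabla_a R - g_{ac}\nabla_{b}R],$$ or (ii) $M$ carries a $(1,3)$-tensor field $K$ satisfying $\nabla_m K_{bce}{}^m = A\, \nabla_m R_{bce}{}^m + B\,(a_{be}\nabla_c \varphi- a_{ce}\nabla_b\varphi)$ (with nonzero constants $A,B$, a smooth function $\varphi$ and a symmetric Codazzi tensor $a_{bc}$) and such that $\nabla_m K_{bce}{}^m=0$ (in particular if $K=0$ or $\nabla_a K_{bcd}{}^e=0$). Then $$R_{am}R_{bce}{}^m + R_{bm}R_{cae}{}^m+ R_{cm}R_{abe}{}^m =0$$ and $$R_{am} R_{bec}{}^m - R_{bm}R_{ace}{}^m + R_{cm} R_{eba}{}^m -R_{em} R_{cab}{}^m =0 .$$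
   Context: Abstract index notation with Einstein summation. $R_{abc}{}^d = \partial_a \Gamma_{bc}^d - \partial_b\Gamma_{ac}^d - \Gamma_{ac}^k\Gamma_{bk}^d + \Gamma_{ak}^d \Gamma_{bc}^k$, Ricci tensor $R_{ac}=R_{abc}{}^b$, scalar curvature $R=g^{ac}R_{ac}$. A Codazzi tensor is a symmetric $(0,2)$ tensor with $\nabla_b a_{cd}=\nabla_c a_{bd}$. *)

theory Defs
  imports "HOL-Analysis.Analysis"
begin

text \<open>Local coordinate formulation: an open set U of real^'n (a chart of M^n,
 n = CARD('n)) carrying a smooth Riemannian metric g. Tensor fields are given
 by their component functions; all index sums run over the finite type 'n.\<close>

definition pd :: "'n::finite \<Rightarrow> (real^'n \<Rightarrow> real) \<Rightarrow> real^'n \<Rightarrow> real" where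
  "pd a f x = frechet_derivative f (at x) (axis a 1)"

fun iter_pd :: "'n::finite list \<Rightarrow> (real^'n \<Rightarrow> real) \<Rightarrow> real^'n \<Rightarrow> real" where
  "iter_pd [] f = f"
| "iter_pd (a # as) f = pd a (iter_pd as f)"

definition smooth_on :: "(real^'n::finite) set \<Rightarrow> (real^'n \<Rightarrow> real) \<Rightarrow> bool" where
  "smooth_on U f \<longleftrightarrow> (\<forall>as. iter_pd as f differentiable_on U)"

definition riemannian_metric :: "(real^'n::finite) set \<Rightarrow> (real^'n \<Rightarrow> 'n \<Rightarrow> 'n \<Rightarrow> real) \<Rightarrow> bool" where
  "riemannian_metric U g \<longleftrightarrow> open U \<and>
     (\<forall>i j. smooth_on U (\<lambda>x. g x i j)) \<and>
     (\<forall>x\<in>U. \<forall>i j. g x i j = g x j i) \<and>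
     (\<forall>x\<in>U. \<forall>v::real^'n. v \<noteq> 0 \<longrightarrow> (\<Sum>i\<in>UNIV. \<Sum>j\<in>UNIV. g x i j * v$i * v$j) > 0)"

definition ginv :: "(real^'n::finite \<Rightarrow> 'n \<Rightarrow> 'n \<Rightarrow> real) \<Rightarrow> real^'n \<Rightarrow> 'n \<Rightarrow> 'n \<Rightarrow> real" where
  "ginv g x i j = matrix_inv (\<chi> k l. g x k l) $ i $ j"

definition Chr :: "(real^'n::finite \<Rightarrow> 'n \<Rightarrow> 'n \<Rightarrow> real) \<Rightarrow> real^'n \<Rightarrow> 'n \<Rightarrow> 'n \<Rightarrow> 'n \<Rightarrow> real" where
  "Chr g x b c d = (1/2) * (\<Sum>k\<in>UNIV. ginv g x d k *
       (pd b (\<lambda>y. g y c k) x + pd c (\<lambda>y. g y b k) x - pd k (\<lambda>y. g y b c) x))"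

definition Riem :: "(real^'n::finite \<Rightarrow> 'n \<Rightarrow> 'n \<Rightarrow> real) \<Rightarrow> real^'n \<Rightarrow> 'n \<Rightarrow> 'n \<Rightarrow> 'n \<Rightarrow> 'n \<Rightarrow> real" where
  "Riem g x a b c d = pd a (\<lambda>y. Chr g y b c d) x - pd b (\<lambda>y. Chr g y a c d) x
     - (\<Sum>k\<in>UNIV. Chr g x a c k * Chr g x b k d) + (\<Sum>k\<in>UNIV. Chr g x a k d * Chr g x b c k)"

definition Ricci :: "(real^'n::finite \<Rightarrow> 'n \<Rightarrow> 'n \<Rightarrow> real) \<Rightarrow> real^'n \<Rightarrow> 'n \<Rightarrow> 'n \<Rightarrow> real" where
  "Ricci g x a c = (\<Sum>b\<in>UNIV. Riem g x a b c b)"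

definition scal :: "(real^'n::finite \<Rightarrow> 'n \<Rightarrow> 'n \<Rightarrow> real) \<Rightarrow> real^'n \<Rightarrow> real" where
  "scal g x = (\<Sum>a\<in>UNIV. \<Sum>c\<in>UNIV. ginv g x a c * Ricci g x a c)"

definition cov02 :: "(real^'n::finite \<Rightarrow> 'n \<Rightarrow> 'n \<Rightarrow> real) \<Rightarrow> (real^'n \<Rightarrow> 'n \<Rightarrow> 'n \<Rightarrow> real)
     \<Rightarrow> real^'n \<Rightarrow> 'n \<Rightarrow> 'n \<Rightarrow> 'n \<Rightarrow> real" where
  "cov02 g T x a b c = pd a (\<lambda>y. T y b c) x
     - (\<Sum>k\<in>UNIV. Chr g x a b k * T x k c) - (\<Sum>k\<in>UNIV. Chr g x a c k * T x b k)"

definition cov13 :: "(real^'n::finite \<Rightarrow> 'n \<Rightarrow> 'n \<Rightarrow> real)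
     \<Rightarrow> (real^'n \<Rightarrow> 'n \<Rightarrow> 'n \<Rightarrow> 'n \<Rightarrow> 'n \<Rightarrow> real)
     \<Rightarrow> real^'n \<Rightarrow> 'n \<Rightarrow> 'n \<Rightarrow> 'n \<Rightarrow> 'n \<Rightarrow> 'n \<Rightarrow> real" where
  "cov13 g K x a b c e d = pd a (\<lambda>y. K y b c e d) x
     - (\<Sum>k\<in>UNIV. Chr g x a b k * K x k c e d) - (\<Sum>k\<in>UNIV. Chr g x a c k * K x b k e d)
     - (\<Sum>k\<in>UNIV. Chr g x a e k * K x b c k d) + (\<Sum>k\<in>UNIV. Chr g x a k d * K x b c e k)"

definition div13 :: "(real^'n::finite \<Rightarrow> 'n \<Rightarrow> 'n \<Rightarrow> real)
     \<Rightarrow> (real^'n \<Rightarrow> 'n \<Rightarrow> 'n \<Rightarrow> 'n \<Rightarrow> 'n \<Rightarrow> real)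
     \<Rightarrow> real^'n \<Rightarrow> 'n \<Rightarrow> 'n \<Rightarrow> 'n \<Rightarrow> real" where
  "div13 g K x b c e = (\<Sum>m\<in>UNIV. cov13 g K x m b c e m)"

definition nearly_conformally_symmetric ::
    "(real^'n::finite) set \<Rightarrow> (real^'n \<Rightarrow> 'n \<Rightarrow> 'n \<Rightarrow> real) \<Rightarrow> bool" where
  "nearly_conformally_symmetric U g \<longleftrightarrow>
    (\<forall>x\<in>U. \<forall>a b c. cov02 g (Ricci g) x a b c - cov02 g (Ricci g) x b a c
        = 1 / (2 * (real CARD('n) - 1)) * (g x b c * pd a (scal g) x - g x a c * pd b (scal g) x))"

definition codazzi :: "(real^'n::finite) set \<Rightarrow> (real^'n \<Rightarrow> 'n \<Rightarrow> 'n \<Rightarrow> real)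
     \<Rightarrow> (real^'n \<Rightarrow> 'n \<Rightarrow> 'n \<Rightarrow> real) \<Rightarrow> bool" where
  "codazzi U g t \<longleftrightarrow> (\<forall>i j. smooth_on U (\<lambda>x. t x i j)) \<and>
     (\<forall>x\<in>U. \<forall>i j. t x i j = t x j i) \<and>
     (\<forall>x\<in>U. \<forall>b c d. cov02 g t x b c d = cov02 g t x c b d)"

end

theory Submission
  imports Defs
begin
lemma pd_has: "(f has_derivative F) (at x) \<Longrightarrow> pd a f x = F (axis a 1)"
  unfolding pd_def using frechet_derivative_at by metis

lemma pd_local:
  assumes "open U" "x \<in> U" "\<And>y. y \<in> U \<Longrightarrow> f y = h y"
  shows "pd a f x = pd a h x"
proof -
  have "\<And>F. (f has_derivative F) (at x) \<longleftrightarrow> (h has_derivative F) (at x)"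
    using has_derivative_transform_within_open assms by metis
  then show ?thesis unfolding pd_def frechet_derivative_def by simp
qed

lemma diff_has: "f differentiable (at x) \<Longrightarrow> (f has_derivative frechet_derivative f (at x)) (at x)"
  using frechet_derivative_works by blast

lemma pd_add: "f differentiable (at x) \<Longrightarrow> h differentiable (at x) \<Longrightarrow>
   pd a (\<lambda>y. f y + h y) x = pd a f x + pd a h x"
  using pd_has[OF has_derivative_add[OF diff_has diff_has]] by (simp add: pd_def)

lemma pd_diff: "f differentiable (at x) \<Longrightarrow> h differentiable (at x) \<Longrightarrow>
   pd a (\<lambda>y. f y - h y) x = pd a f x - pd a h x"
  using pd_has[OF has_derivative_diff[OF diff_has diff_has]] by (simp add: pd_def)

lemma pd_mult: "f differentiable (at x) \<Longrightarrow> h differentiable (at x) \<Longrightarrow>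
   pd a (\<lambda>y. f y * h y) x = pd a f x * h x + f x * pd a h x"
  using pd_has[OF has_derivative_mult[OF diff_has diff_has]] by (simp add: pd_def algebra_simps)

lemma pd_const: "pd a (\<lambda>y. c) x = 0"
  using pd_has[of "\<lambda>y. c" "\<lambda>h. 0" x a] by simp

lemma pd_cmult: "f differentiable (at x) \<Longrightarrow> pd a (\<lambda>y. c * f y) x = c * pd a f x"
  using pd_mult[of "\<lambda>y. c" x f a] by (simp add: pd_const)

lemma pd_sum: "finite S \<Longrightarrow> (\<And>i. i \<in> S \<Longrightarrow> f i differentiable (at x)) \<Longrightarrow>
   pd a (\<lambda>y. \<Sum>i\<in>S. f i y) x = (\<Sum>i\<in>S. pd a (f i) x)"
proof (induction S rule: finite_induct)
  case empty then show ?case by (simp add: pd_const)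
next
  case (insert j S)
  have "(\<lambda>y. \<Sum>i\<in>S. f i y) differentiable (at x)"
    using insert by (intro differentiable_sum) auto
  then show ?case using insert by (simp add: pd_add)
qed

lemma pd_inverse: "f differentiable (at x) \<Longrightarrow> f x \<noteq> 0 \<Longrightarrow>
   pd a (\<lambda>y. inverse (f y)) x = - (inverse (f x) * pd a f x * inverse (f x))"
  by (rule pd_has[OF Deriv.has_derivative_inverse[OF _ diff_has], simplified pd_def[symmetric]])

inductive gen :: "(real^'n::finite) set \<Rightarrow> (real^'n \<Rightarrow> real) \<Rightarrow> bool" for U where
  gbase: "smooth_on U f \<Longrightarrow> gen U f"
| gconst: "gen U (\<lambda>x. c)"
| gadd: "gen U f \<Longrightarrow> gen U h \<Longrightarrow> gen U (\<lambda>x. f x + h x)"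
| gmult: "gen U f \<Longrightarrow> gen U h \<Longrightarrow> gen U (\<lambda>x. f x * h x)"
| ginverse: "gen U f \<Longrightarrow> (\<forall>x\<in>U. f x \<noteq> 0) \<Longrightarrow> gen U (\<lambda>x. inverse (f x))"
| gcong: "gen U f \<Longrightarrow> (\<forall>x\<in>U. f x = h x) \<Longrightarrow> gen U h"

lemma iter_pd_append: "iter_pd (as @ [a]) f = iter_pd as (pd a f)"
  by (induction as) auto

lemma smooth_pd: "smooth_on U f \<Longrightarrow> smooth_on U (pd a f)"
  unfolding smooth_on_def by (metis iter_pd_append)

lemma smooth_diffon: "smooth_on U f \<Longrightarrow> f differentiable_on U"
  unfolding smooth_on_def by (metis iter_pd.simps(1))

lemma gen_props:
  assumes "open U" "gen U f"
  shows "f differentiable_on U \<and> (\<forall>a. gen U (pd a f))"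
  using assms(2)
proof (induction rule: gen.induct)
  case (gbase f)
  then show ?case by (simp add: smooth_diffon smooth_pd gen.gbase)
next
  case (gconst c)
  have "gen U (pd a (\<lambda>x. c))" for a by (rule gen.gcong[OF gen.gconst[of U 0]]) (simp add: pd_const)
  then show ?case by auto
next
  case (gadd f h)
  have d: "x \<in> U \<Longrightarrow> f differentiable (at x) \<and> h differentiable (at x)" for x
    using gadd assms(1) differentiable_on_eq_differentiable_at by blast
  have "gen U (pd a (\<lambda>x. f x + h x))" for a
  proof (rule gcong)
    show "gen U (\<lambda>x. pd a f x + pd a h x)" using gadd by (intro gen.gadd) auto
    show "\<forall>x\<in>U. pd a f x + pd a h x = pd a (\<lambda>x. f x + h x) x" using d by (simp add: pd_add)
  qed
  then show ?case using gadd by (auto intro: differentiable_on_add)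
next
  case (gmult f h)
  have d: "x \<in> U \<Longrightarrow> f differentiable (at x) \<and> h differentiable (at x)" for x
    using gmult assms(1) differentiable_on_eq_differentiable_at by blast
  have "gen U (pd a (\<lambda>x. f x * h x))" for a
  proof (rule gcong)
    show "gen U (\<lambda>x. pd a f x * h x + f x * pd a h x)" using gmult by (intro gen.gadd gen.gmult) auto
    show "\<forall>x\<in>U. pd a f x * h x + f x * pd a h x = pd a (\<lambda>x. f x * h x) x" using d by (simp add: pd_mult)
  qed
  then show ?case using gmult by (auto intro: differentiable_on_mult)
next
  case (ginverse f)
  have d: "x \<in> U \<Longrightarrow> f differentiable (at x)" for x
    using ginverse assms(1) differentiable_on_eq_differentiable_at by blast
  have "gen U (pd a (\<lambda>x. inverse (f x)))" for a
  proof (rule gcong)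
    show "gen U (\<lambda>x. -1 * inverse (f x) * pd a f x * inverse (f x))"
      using ginverse by (intro gen.gmult gen.gconst gen.ginverse) auto
    show "\<forall>x\<in>U. -1 * inverse (f x) * pd a f x * inverse (f x) = pd a (\<lambda>x. inverse (f x)) x"
      using d ginverse by (simp add: pd_inverse)
  qed
  then show ?case using ginverse by (auto intro!: differentiable_on_inverse)
next
  case (gcong f h)
  have "gen U (pd a h)" for a
    apply (rule gen.gcong[OF conjunct2[OF gcong.IH, rule_format, of a]])
    using gcong assms(1) by (auto intro: pd_local)
  moreover have "h differentiable_on U"
    unfolding differentiable_on_eq_differentiable_at[OF assms(1)]
  proof
    fix x assume x: "x \<in> U"
    then have "f differentiable at x" using gcong assms(1) differentiable_on_eq_differentiable_at by blast
    then obtain F where "(f has_derivative F) (at x)" unfolding differentiable_def by blast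
    then have "(h has_derivative F) (at x)"
      by (rule has_derivative_transform_within_open[OF _ assms(1) x]) (use gcong in auto)
    then show "h differentiable at x" unfolding differentiable_def by blast
  qed
  ultimately show ?case by auto
qed

lemma gen_smooth: assumes "open U" "gen U f" shows "smooth_on U f"
proof -
  have "gen U (iter_pd as f)" for as
    by (induction as) (use assms gen_props in auto)
  then show ?thesis unfolding smooth_on_def using gen_props assms by blast
qed

lemma gen_iff: "open U \<Longrightarrow> gen U f \<longleftrightarrow> smooth_on U f"
  using gen_smooth gbase by blast

lemma gen_diff: "open U \<Longrightarrow> gen U f \<Longrightarrow> x \<in> U \<Longrightarrow> f differentiable (at x)"
  using gen_props differentiable_on_eq_differentiable_at by blast

lemma gen_pd: "open U \<Longrightarrow> gen U f \<Longrightarrow> gen U (pd a f)"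
  using gen_props by blast

lemma gen_sum: "finite S \<Longrightarrow> (\<And>i. i \<in> S \<Longrightarrow> gen U (f i)) \<Longrightarrow> gen U (\<lambda>x. \<Sum>i\<in>S. f i x)"
  by (induction S rule: finite_induct) (auto intro: gen.intros)

lemma gen_prod: "finite S \<Longrightarrow> (\<And>i. i \<in> S \<Longrightarrow> gen U (f i)) \<Longrightarrow> gen U (\<lambda>x. \<Prod>i\<in>S. f i x)"
  by (induction S rule: finite_induct) (auto intro: gen.intros)

lemma gen_minus: "gen U f \<Longrightarrow> gen U (\<lambda>x. - f x)"
  using gmult[OF gconst[of U "-1"]] by simp

lemma gen_diffr: "gen U f \<Longrightarrow> gen U h \<Longrightarrow> gen U (\<lambda>x. f x - h x)"
  using gadd[OF _ gen_minus] by simp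

lemma line_deriv:
  fixes f :: "real^'n::finite \<Rightarrow> real"
  assumes "f differentiable at (p + s *\<^sub>R v)"
  shows "((\<lambda>s. f (p + s *\<^sub>R v)) has_real_derivative frechet_derivative f (at (p + s *\<^sub>R v)) v) (at s)"
proof -
  have l: "((\<lambda>s. p + s *\<^sub>R v) has_derivative (\<lambda>s. s *\<^sub>R v)) (at s)"
    by (auto intro!: derivative_eq_intros)
  have c: "((\<lambda>s. f (p + s *\<^sub>R v)) has_derivative (\<lambda>t. frechet_derivative f (at (p + s *\<^sub>R v)) (t *\<^sub>R v))) (at s)"
    using has_derivative_compose[OF l diff_has[OF assms]] by simp
  have lin: "linear (frechet_derivative f (at (p + s *\<^sub>R v)))"
    using diff_has[OF assms] has_derivative_linear by blast
  show ?thesis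
    apply (rule has_derivative_imp_has_field_derivative[OF c])
    using linear_scale[OF lin] by simp
qed

lemma line_pd:
  fixes f :: "real^'n::finite \<Rightarrow> real"
  assumes "f differentiable at (p + s *\<^sub>R axis a 1)"
  shows "((\<lambda>s. f (p + s *\<^sub>R axis a 1)) has_real_derivative pd a f (p + s *\<^sub>R axis a 1)) (at s)"
  using line_deriv[OF assms] unfolding pd_def .

lemma sq_mvt:
  fixes f :: "real^'n::finite \<Rightarrow> real"
  assumes op: "open U" and g: "gen U f" and h: "0 < h"
    and sub: "\<And>s t. 0 \<le> s \<Longrightarrow> s \<le> h \<Longrightarrow> 0 \<le> t \<Longrightarrow> t \<le> h \<Longrightarrow> x + (s *\<^sub>R axis a 1 + t *\<^sub>R axis b 1) \<in> U"
  shows "\<exists>s t. 0 < s \<and> s < h \<and> 0 < t \<and> t < h \<and>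
     f (x + (h *\<^sub>R axis a 1 + h *\<^sub>R axis b 1)) - f (x + h *\<^sub>R axis a 1) - f (x + h *\<^sub>R axis b 1) + f x
       = h * (h * pd b (pd a f) (x + (s *\<^sub>R axis a 1 + t *\<^sub>R axis b 1)))"
proof -
  let ?e = "axis a 1 :: real^'n" and ?d = "axis b 1 :: real^'n"
  define u where "u s = f ((x + h *\<^sub>R ?d) + s *\<^sub>R ?e) - f (x + s *\<^sub>R ?e)" for s
  have gd: "open U \<and> gen U (pd a f)" using op g gen_pd by blast
  have du: "DERIV u s :> pd a f ((x + h *\<^sub>R ?d) + s *\<^sub>R ?e) - pd a f (x + s *\<^sub>R ?e)" if "0 \<le> s" "s \<le> h" for s
  proof -
    have "(x + h *\<^sub>R ?d) + s *\<^sub>R ?e \<in> U" using sub[of s h] that h by (simp add: algebra_simps)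
    moreover have "x + s *\<^sub>R ?e \<in> U" using sub[of s 0] that h by simp
    ultimately show ?thesis unfolding u_def
      by (intro DERIV_diff line_pd gen_diff[OF op g])
  qed
  obtain \<xi> where xi: "0 < \<xi>" "\<xi> < h"
     and e1: "u h - u 0 = (h - 0) * (pd a f ((x + h *\<^sub>R ?d) + \<xi> *\<^sub>R ?e) - pd a f (x + \<xi> *\<^sub>R ?e))"
    using MVT2[OF h du] by auto
  define w where "w t = pd a f ((x + \<xi> *\<^sub>R ?e) + t *\<^sub>R ?d)" for t
  have dw: "DERIV w t :> pd b (pd a f) ((x + \<xi> *\<^sub>R ?e) + t *\<^sub>R ?d)" if "0 \<le> t" "t \<le> h" for t
  proof -
    have "(x + \<xi> *\<^sub>R ?e) + t *\<^sub>R ?d \<in> U" using sub[of \<xi> t] that xi by (simp add: algebra_simps)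
    then show ?thesis unfolding w_def
      by (intro line_pd gen_diff[OF op gen_pd[OF op g]])
  qed
  obtain \<eta> where eta: "0 < \<eta>" "\<eta> < h"
     and e2: "w h - w 0 = (h - 0) * pd b (pd a f) ((x + \<xi> *\<^sub>R ?e) + \<eta> *\<^sub>R ?d)"
    using MVT2[OF h dw] by auto
  have "f (x + (h *\<^sub>R ?e + h *\<^sub>R ?d)) - f (x + h *\<^sub>R ?e) - f (x + h *\<^sub>R ?d) + f x = u h - u 0"
    unfolding u_def by (simp add: algebra_simps)
  also have "\<dots> = h * (w h - w 0)" using e1 unfolding w_def by (simp add: algebra_simps)
  also have "\<dots> = h * (h * pd b (pd a f) (x + (\<xi> *\<^sub>R ?e + \<eta> *\<^sub>R ?d)))" using e2 by (simp add: algebra_simps)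
  finally show ?thesis using xi eta by blast
qed

lemma schwarz:
  fixes f :: "real^'n::finite \<Rightarrow> real"
  assumes op: "open U" and g: "gen U f" and x: "x \<in> U"
  shows "pd a (pd b f) x = pd b (pd a f) x"
proof (rule ccontr)
  assume ne: "pd a (pd b f) x \<noteq> pd b (pd a f) x"
  let ?q1 = "pd b (pd a f)" and ?q2 = "pd a (pd b f)"
  define \<epsilon> where "\<epsilon> = \<bar>?q1 x - ?q2 x\<bar> / 2"
  have ep: "\<epsilon> > 0" using ne unfolding \<epsilon>_def by auto
  have c1: "isCont ?q1 x" using gen_diff[OF op gen_pd[OF op gen_pd[OF op g]] x] differentiable_imp_continuous_within by blast
  have c2: "isCont ?q2 x" using gen_diff[OF op gen_pd[OF op gen_pd[OF op g]] x] differentiable_imp_continuous_within by blast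
  obtain d1 where d1: "d1 > 0" "\<And>y. dist y x < d1 \<Longrightarrow> dist (?q1 y) (?q1 x) < \<epsilon>"
    using c1 ep unfolding continuous_at_eps_delta by blast
  obtain d2 where d2: "d2 > 0" "\<And>y. dist y x < d2 \<Longrightarrow> dist (?q2 y) (?q2 x) < \<epsilon>"
    using c2 ep unfolding continuous_at_eps_delta by blast
  obtain r where r: "r > 0" "ball x r \<subseteq> U" using op x open_contains_ball by blast
  define h where "h = min r (min d1 d2) / 4"
  have h: "h > 0" using r d1 d2 unfolding h_def by auto
  have nrm: "norm (s *\<^sub>R axis i 1 + t *\<^sub>R axis j 1 :: real^'n) \<le> 2 * h"
    if "0 \<le> s" "s \<le> h" "0 \<le> t" "t \<le> h" for s t i j
  proof -
    have "norm (s *\<^sub>R axis i 1 + t *\<^sub>R axis j 1 :: real^'n) \<le> norm (s *\<^sub>R axis i 1 :: real^'n) + norm (t *\<^sub>R axis j 1 :: real^'n)"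
      by (rule norm_triangle_ineq)
    also have "\<dots> = \<bar>s\<bar> + \<bar>t\<bar>" by simp
    finally show ?thesis using that by simp
  qed
  have dn: "\<And>v. dist x (x + v) = norm v" by (simp add: dist_norm)
  have sub: "x + (s *\<^sub>R axis i 1 + t *\<^sub>R axis j 1) \<in> U"
    if "0 \<le> s" "s \<le> h" "0 \<le> t" "t \<le> h" for s t i j
  proof -
    have "2 * h < r" using h unfolding h_def by auto
    then have "x + (s *\<^sub>R axis i 1 + t *\<^sub>R axis j 1) \<in> ball x r"
      using nrm[OF that, of i j] dn[of "s *\<^sub>R axis i 1 + t *\<^sub>R axis j 1"] unfolding mem_ball by linarith
    then show ?thesis using r by blast
  qed
  obtain s1 t1 where st1: "0 < s1" "s1 < h" "0 < t1" "t1 < h"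
    and E1: "f (x + (h *\<^sub>R axis a 1 + h *\<^sub>R axis b 1)) - f (x + h *\<^sub>R axis a 1) - f (x + h *\<^sub>R axis b 1) + f x
       = h * (h * ?q1 (x + (s1 *\<^sub>R axis a 1 + t1 *\<^sub>R axis b 1)))"
    using sq_mvt[OF op g h sub] by blast
  obtain s2 t2 where st2: "0 < s2" "s2 < h" "0 < t2" "t2 < h"
    and E2: "f (x + (h *\<^sub>R axis b 1 + h *\<^sub>R axis a 1)) - f (x + h *\<^sub>R axis b 1) - f (x + h *\<^sub>R axis a 1) + f x
       = h * (h * ?q2 (x + (s2 *\<^sub>R axis b 1 + t2 *\<^sub>R axis a 1)))"
    using sq_mvt[OF op g h sub, of b a] by blast
  have eq: "?q1 (x + (s1 *\<^sub>R axis a 1 + t1 *\<^sub>R axis b 1)) = ?q2 (x + (s2 *\<^sub>R axis b 1 + t2 *\<^sub>R axis a 1))"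
    using E1 E2 h by (simp add: algebra_simps)
  have "2 * h < d1" "2 * h < d2" using h unfolding h_def by auto
  then have "dist (x + (s1 *\<^sub>R axis a 1 + t1 *\<^sub>R axis b 1)) x < d1" "dist (x + (s2 *\<^sub>R axis b 1 + t2 *\<^sub>R axis a 1)) x < d2"
    using nrm[of s1 t1 a b] nrm[of s2 t2 b a] st1 st2 by (auto simp: dist_norm)
  then have "\<bar>?q1 (x + (s1 *\<^sub>R axis a 1 + t1 *\<^sub>R axis b 1)) - ?q1 x\<bar> < \<epsilon>"
       "\<bar>?q2 (x + (s2 *\<^sub>R axis b 1 + t2 *\<^sub>R axis a 1)) - ?q2 x\<bar> < \<epsilon>"
    using d1 d2 by (auto simp: dist_real_def)
  moreover have "\<And>u w L1 L2::real. \<bar>u - L1\<bar> < \<bar>L1 - L2\<bar> / 2 \<Longrightarrow> \<bar>w - L2\<bar> < \<bar>L1 - L2\<bar> / 2 \<Longrightarrow> u = w \<Longrightarrow> False"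
    by (simp add: abs_if split: if_split_asm)
  ultimately show False using eq unfolding \<epsilon>_def by blast
qed

lemma gen_if: "gen U f \<Longrightarrow> gen U h \<Longrightarrow> gen U (\<lambda>y. if P then f y else h y)"
  by (cases P) auto

lemma gen_det:
  fixes M :: "real^'n::finite \<Rightarrow> 'n \<Rightarrow> 'n \<Rightarrow> real"
  assumes "\<And>i j. gen U (\<lambda>y. M y i j)"
  shows "gen U (\<lambda>y. det (\<chi> i j. M y i j))"
  unfolding det_def
  by (auto intro!: gen_sum gen_prod gmult gconst assms finite_permutations)

lemma rm_open: "riemannian_metric U g \<Longrightarrow> open U"
  unfolding riemannian_metric_def by blast

lemma rm_gen: "riemannian_metric U g \<Longrightarrow> gen U (\<lambda>y. g y i j)"
  unfolding riemannian_metric_def by (blast intro: gbase)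

lemma rm_sym: "riemannian_metric U g \<Longrightarrow> y \<in> U \<Longrightarrow> g y i j = g y j i"
  unfolding riemannian_metric_def by blast

lemma det_nz:
  fixes g :: "real^'n::finite \<Rightarrow> 'n \<Rightarrow> 'n \<Rightarrow> real"
  assumes rm: "riemannian_metric U g" and y: "y \<in> U"
  shows "det (\<chi> k l. g y k l) \<noteq> 0"
proof -
  let ?G = "(\<chi> k l. g y k l) :: real^'n^'n"
  have pos: "\<And>v::real^'n. v \<noteq> 0 \<Longrightarrow> (\<Sum>i\<in>UNIV. \<Sum>j\<in>UNIV. g y i j * v$i * v$j) > 0"
    using rm y unfolding riemannian_metric_def by blast
  have ker: "v = 0" if "?G *v v = 0" for v
  proof (rule ccontr)
    assume "v \<noteq> 0"
    then have "(\<Sum>i\<in>UNIV. \<Sum>j\<in>UNIV. g y i j * v$i * v$j) > 0" by (rule pos)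
    moreover have "(\<Sum>i\<in>UNIV. \<Sum>j\<in>UNIV. g y i j * v$i * v$j) = (\<Sum>i\<in>UNIV. v$i * (?G *v v)$i)"
      by (simp add: matrix_vector_mult_def sum_distrib_left algebra_simps)
    ultimately show False using that by simp
  qed
  have "inj ((*v) ?G)"
  proof (rule injI)
    fix u w assume "?G *v u = ?G *v w"
    then have "?G *v (u - w) = 0" by (simp add: matrix_vector_mult_diff_distrib)
    then show "u = w" using ker[of "u - w"] by simp
  qed
  then show ?thesis
    using det_nz_iff_inj[of "(*v) ?G"] by simp
qed

lemma minv:
  fixes g :: "real^'n::finite \<Rightarrow> 'n \<Rightarrow> 'n \<Rightarrow> real"
  assumes rm: "riemannian_metric U g" and y: "y \<in> U"
  shows "(\<chi> k l. g y k l) ** matrix_inv (\<chi> k l. g y k l) = mat 1 \<and> matrix_inv (\<chi> k l. g y k l) ** (\<chi> k l. g y k l) = mat 1"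
proof -
  have "invertible ((\<chi> k l. g y k l) :: real^'n^'n)"
    using det_nz[OF rm y] invertible_det_nz by blast
  then show ?thesis unfolding invertible_def matrix_inv_def by (rule someI_ex)
qed

lemma ginv_right:
  fixes g :: "real^'n::finite \<Rightarrow> 'n \<Rightarrow> 'n \<Rightarrow> real"
  assumes rm: "riemannian_metric U g" and y: "y \<in> U"
  shows "(\<Sum>k\<in>UNIV. g y i k * ginv g y k j) = (if i = j then 1 else 0)"
proof -
  have "((\<chi> k l. g y k l) ** matrix_inv (\<chi> k l. g y k l)) $ i $ j = (mat 1 :: real^'n^'n) $ i $ j"
    using minv[OF rm y] by simp
  then show ?thesis unfolding ginv_def by (simp add: matrix_matrix_mult_def mat_def)
qed

lemma ginv_cramer:
  fixes g :: "real^'n::finite \<Rightarrow> 'n \<Rightarrow> 'n \<Rightarrow> real"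
  assumes rm: "riemannian_metric U g" and y: "y \<in> U"
  shows "ginv g y i j = det (\<chi> r s. if s = i then (if r = j then 1 else 0) else g y r s) * inverse (det (\<chi> k l. g y k l))"
proof -
  let ?G = "(\<chi> k l. g y k l) :: real^'n^'n"
  let ?v = "matrix_inv ?G *v axis j 1"
  have "?G *v ?v = axis j 1"
    using minv[OF rm y] by (simp add: matrix_vector_mul_assoc)
  then have "?v = (\<chi> k. det(\<chi> r s. if s = k then (axis j 1 :: real^'n)$r else ?G$r$s) / det ?G)"
    using cramer[OF det_nz[OF rm y]] by blast
  then have "?v $ i = det(\<chi> r s. if s = i then (axis j 1 :: real^'n)$r else ?G$r$s) / det ?G" by simp
  moreover have "?v $ i = ginv g y i j"
    unfolding ginv_def by (simp add: matrix_vector_mult_def axis_def if_distrib cong: if_cong)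
  moreover have "(\<chi> r s. if s = i then (axis j 1 :: real^'n)$r else ?G$r$s) = (\<chi> r s. if s = i then (if r = j then 1 else 0) else g y r s)"
    by (simp add: axis_def vec_eq_iff)
  ultimately show ?thesis by (simp add: divide_inverse)
qed

lemma gen_ginv:
  fixes g :: "real^'n::finite \<Rightarrow> 'n \<Rightarrow> 'n \<Rightarrow> real"
  assumes rm: "riemannian_metric U g"
  shows "gen U (\<lambda>y. ginv g y i j)"
proof (rule gcong)
  show "gen U (\<lambda>y. det (\<chi> r s. if s = i then (if r = j then 1 else 0) else g y r s) * inverse (det (\<chi> k l. g y k l)))"
    using det_nz[OF rm]
    by (intro gmult ginverse gen_det gen_if gconst rm_gen[OF rm]) auto
  show "\<forall>y\<in>U. det (\<chi> r s. if s = i then (if r = j then 1 else 0) else g y r s) * inverse (det (\<chi> k l. g y k l)) = ginv g y i j"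
    using ginv_cramer[OF rm] by simp
qed

lemma gen_Chr: "riemannian_metric U g \<Longrightarrow> gen U (\<lambda>y. Chr g y a b c)"
  unfolding Chr_def
  by (intro gmult gconst gen_sum finite_UNIV gen_ginv gadd gen_diffr gen_pd rm_open rm_gen) auto

lemma gen_Riem: "riemannian_metric U g \<Longrightarrow> gen U (\<lambda>y. Riem g y a b c d)"
  unfolding Riem_def
  by (intro gadd gen_diffr gmult gen_sum finite_UNIV gen_pd rm_open gen_Chr) auto

lemma gen_Ricci: "riemannian_metric U g \<Longrightarrow> gen U (\<lambda>y. Ricci g y a b)"
  unfolding Ricci_def by (intro gen_sum gen_Riem) auto

lemma gen_scal: "riemannian_metric U g \<Longrightarrow> gen U (scal g)"
  unfolding scal_def[abs_def] by (intro gen_sum gmult gen_ginv gen_Ricci) auto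

lemma Chr_sym:
  fixes g :: "real^'n::finite \<Rightarrow> 'n \<Rightarrow> 'n \<Rightarrow> real"
  assumes rm: "riemannian_metric U g" and y: "y \<in> U"
  shows "Chr g y a b k = Chr g y b a k"
proof -
  have "pd l (\<lambda>y. g y a b) y = pd l (\<lambda>y. g y b a) y" for l
    by (rule pd_local[OF rm_open[OF rm] y]) (use rm_sym[OF rm] in auto)
  then show ?thesis unfolding Chr_def by (simp add: algebra_simps)
qed

lemma ricci_alg:
  fixes t :: "'n::finite \<Rightarrow> 'n \<Rightarrow> real" and dt :: "'n \<Rightarrow> 'n \<Rightarrow> 'n \<Rightarrow> real" and ddt :: "'n \<Rightarrow> 'n \<Rightarrow> 'n \<Rightarrow> 'n \<Rightarrow> real" and G :: "'n \<Rightarrow> 'n \<Rightarrow> 'n \<Rightarrow> real" and dG :: "'n \<Rightarrow> 'n \<Rightarrow> 'n \<Rightarrow> 'n \<Rightarrow> real"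
  assumes Gs: "\<And>a b k. G a b k = G b a k" and ds: "\<And>c a b e. ddt c a b e = ddt a c b e"
  defines "D \<equiv> \<lambda>a b e. dt a b e - (\<Sum>k\<in>UNIV. G a b k * t k e) - (\<Sum>k\<in>UNIV. G a e k * t b k)"
  defines "dD \<equiv> \<lambda>c a b e. ddt c a b e - (\<Sum>k\<in>UNIV. dG c a b k * t k e + G a b k * dt c k e)
                   - (\<Sum>k\<in>UNIV. dG c a e k * t b k + G a e k * dt c b k)"
  defines "C \<equiv> \<lambda>c a b e. dD c a b e - (\<Sum>k\<in>UNIV. G c a k * D k b e) - (\<Sum>k\<in>UNIV. G c b k * D a k e)
                   - (\<Sum>k\<in>UNIV. G c e k * D a b k)"
  defines "R \<equiv> \<lambda>c a b m. dG c a b m - dG a c b m - (\<Sum>k\<in>UNIV. G c b k * G a k m) + (\<Sum>k\<in>UNIV. G c k m * G a b k)"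
  shows "C c a b e - C a c b e = - (\<Sum>m\<in>UNIV. R c a b m * t m e) - (\<Sum>m\<in>UNIV. R c a e m * t b m)"
  unfolding C_def dD_def D_def R_def
  apply (simp add: sum_subtractf sum.distrib sum_distrib_left sum_distrib_right algebra_simps ds)
  apply (simp add: Gs)
  apply (subst (1 2 3 4 5 6) sum.swap)
  apply (simp add: Gs algebra_simps)
  done

lemma bianchi_alg:
  fixes G :: "'n::finite \<Rightarrow> 'n \<Rightarrow> 'n \<Rightarrow> real" and dG :: "'n \<Rightarrow> 'n \<Rightarrow> 'n \<Rightarrow> 'n \<Rightarrow> real"
    and ddG :: "'n \<Rightarrow> 'n \<Rightarrow> 'n \<Rightarrow> 'n \<Rightarrow> 'n \<Rightarrow> real"
  assumes Gs: "\<And>a b k. G a b k = G b a k" and dGs: "\<And>a b c k. dG a b c k = dG a c b k"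
    and ds: "\<And>a b c e k. ddG a b c e k = ddG b a c e k"
  defines "R \<equiv> \<lambda>b c e d. dG b c e d - dG c b e d - (\<Sum>k\<in>UNIV. G b e k * G c k d) + (\<Sum>k\<in>UNIV. G b k d * G c e k)"
  defines "dR \<equiv> \<lambda>a b c e d. ddG a b c e d - ddG a c b e d - (\<Sum>k\<in>UNIV. dG a b e k * G c k d + G b e k * dG a c k d)
      + (\<Sum>k\<in>UNIV. dG a b k d * G c e k + G b k d * dG a c e k)"
  defines "N \<equiv> \<lambda>a b c e d. dR a b c e d - (\<Sum>k\<in>UNIV. G a b k * R k c e d) - (\<Sum>k\<in>UNIV. G a c k * R b k e d)
      - (\<Sum>k\<in>UNIV. G a e k * R b c k d) + (\<Sum>k\<in>UNIV. G a k d * R b c e k)"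
  shows "N a b c e d + N b c a e d + N c a b e d = 0"
  unfolding N_def dR_def R_def
  apply (simp add: sum_subtractf sum.distrib sum_distrib_left sum_distrib_right algebra_simps ds)
  apply (simp add: Gs dGs algebra_simps)
  apply (subst (1 2 3 4 5 6) sum.swap)
  apply (simp add: Gs algebra_simps)
  done

definition cov03 :: "(real^'n::finite \<Rightarrow> 'n \<Rightarrow> 'n \<Rightarrow> real) \<Rightarrow> (real^'n \<Rightarrow> 'n \<Rightarrow> 'n \<Rightarrow> 'n \<Rightarrow> real)
     \<Rightarrow> real^'n \<Rightarrow> 'n \<Rightarrow> 'n \<Rightarrow> 'n \<Rightarrow> 'n \<Rightarrow> real" where
  "cov03 g D x c a b e = pd c (\<lambda>y. D y a b e) x
     - (\<Sum>k\<in>UNIV. Chr g x c a k * D x k b e) - (\<Sum>k\<in>UNIV. Chr g x c b k * D x a k e)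
     - (\<Sum>k\<in>UNIV. Chr g x c e k * D x a b k)"

lemma Riem_anti: "Riem g y a b c d = - Riem g y b a c d"
  unfolding Riem_def by (simp add: algebra_simps)


context
  fixes U :: "(real^'n::finite) set" and g :: "real^'n \<Rightarrow> 'n \<Rightarrow> 'n \<Rightarrow> real" and x :: "real^'n"
  assumes rm: "riemannian_metric U g" and xU: "x \<in> U"
begin

lemma op: "open U" using rm_open[OF rm] .

lemma dx[simp]: "gen U f \<Longrightarrow> f differentiable (at x)"
  using gen_diff[OF op _ xU] .

lemmas gen_simps[simp] = gadd gmult gen_diffr gen_sum gen_pd[OF op] gconst gen_Chr[OF rm] gen_Ricci[OF rm]
  gen_Riem[OF rm] rm_gen[OF rm] gen_ginv[OF rm] gen_minus

lemma pd_minus: "f differentiable (at x) \<Longrightarrow> pd a (\<lambda>y. - f y) x = - pd a f x"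
  using pd_cmult[of f x a "-1"] by simp

lemmas pd_simps = pd_add pd_diff pd_mult pd_sum pd_const pd_minus

lemma pd_cov02:
  assumes T: "\<And>i j. gen U (\<lambda>y. T y i j)"
  shows "pd c (\<lambda>y. cov02 g T y a b e) x = pd c (pd a (\<lambda>y. T y b e)) x
     - (\<Sum>k\<in>UNIV. pd c (\<lambda>y. Chr g y a b k) x * T x k e + Chr g x a b k * pd c (\<lambda>y. T y k e) x)
     - (\<Sum>k\<in>UNIV. pd c (\<lambda>y. Chr g y a e k) x * T x b k + Chr g x a e k * pd c (\<lambda>y. T y b k) x)"
  unfolding cov02_def using T by (simp add: pd_simps)

lemma gen_cov02:
  assumes T: "\<And>i j. gen U (\<lambda>y. T y i j)"
  shows "gen U (\<lambda>y. cov02 g T y a b e)"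
  unfolding cov02_def using T by simp

lemma pd_Riem:
  "pd a (\<lambda>y. Riem g y b c e d) x = pd a (pd b (\<lambda>y. Chr g y c e d)) x - pd a (pd c (\<lambda>y. Chr g y b e d)) x
     - (\<Sum>k\<in>UNIV. pd a (\<lambda>y. Chr g y b e k) x * Chr g x c k d + Chr g x b e k * pd a (\<lambda>y. Chr g y c k d) x)
     + (\<Sum>k\<in>UNIV. pd a (\<lambda>y. Chr g y b k d) x * Chr g x c e k + Chr g x b k d * pd a (\<lambda>y. Chr g y c e k) x)"
  unfolding Riem_def by (simp add: pd_simps)

lemma Gs: "Chr g x a b k = Chr g x b a k"
  using Chr_sym[OF rm xU] .

lemma dGs: "pd a (\<lambda>y. Chr g y b c k) x = pd a (\<lambda>y. Chr g y c b k) x"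
  by (rule pd_local[OF op xU]) (use Chr_sym[OF rm] in auto)

lemma ddGs: "pd a (pd b (\<lambda>y. Chr g y c e k)) x = pd b (pd a (\<lambda>y. Chr g y c e k)) x"
  by (rule schwarz[OF op _ xU]) simp

lemma bianchi2: "cov13 g (Riem g) x a b c e d + cov13 g (Riem g) x b c a e d + cov13 g (Riem g) x c a b e d = 0"
  using bianchi_alg[where G="\<lambda>a b k. Chr g x a b k" and dG="\<lambda>a b c k. pd a (\<lambda>y. Chr g y b c k) x"
      and ddG="\<lambda>a b c e k. pd a (pd b (\<lambda>y. Chr g y c e k)) x", OF Gs dGs ddGs]
  unfolding cov13_def pd_Riem unfolding Riem_def by simp

lemma bianchi1: "Riem g x a b c d + Riem g x b c a d + Riem g x c a b d = 0"
  unfolding Riem_def by (simp add: Gs dGs algebra_simps)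

lemma contraction: "(\<Sum>m\<in>UNIV. cov13 g (Riem g) x b c m e m) = cov02 g (Ricci g) x b c e"
  unfolding cov13_def cov02_def Ricci_def
  apply (simp add: pd_simps sum_subtractf sum.distrib sum_distrib_left sum_distrib_right algebra_simps)
  apply (subst (4 5 6) sum.swap)
  apply simp
  done

lemma cov13_anti:
  assumes K: "\<And>y a b e d. K y a b e d = - K y b a e d" and Kg: "\<And>a b e d. gen U (\<lambda>y. K y a b e d)"
  shows "cov13 g K x c a b e d = - cov13 g K x c b a e d"
proof -
  have eqf: "(\<lambda>y. K y a b e d) = (\<lambda>y. - K y b a e d)" by (rule ext) (rule K)
  have r1: "K x k b e d = - K x b k e d" "K x a k e d = - K x k a e d" "K x a b k d = - K x b a k d"
    "K x a b e k = - K x b a e k" for k by (rule K)+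
  show ?thesis unfolding cov13_def eqf using Kg
    by (simp add: pd_minus r1 sum_negf)
qed

lemma div_formula: "div13 g (Riem g) x b c e = cov02 g (Ricci g) x c b e - cov02 g (Ricci g) x b c e"
proof -
  have "(\<Sum>m\<in>UNIV. cov13 g (Riem g) x m b c e m + cov13 g (Riem g) x b c m e m + cov13 g (Riem g) x c m b e m) = 0"
    using bianchi2 by simp
  moreover have "cov13 g (Riem g) x c m b e m = - cov13 g (Riem g) x c b m e m" for m
    by (rule cov13_anti) (rule Riem_anti, simp)
  ultimately show ?thesis
    unfolding div13_def using contraction[of b c e] contraction[of c b e]
    by (simp add: sum.distrib sum_subtractf)
qed

lemma ricci_id:
  assumes T: "\<And>i j. gen U (\<lambda>y. T y i j)"
  shows "cov03 g (cov02 g T) x c a b e - cov03 g (cov02 g T) x a c b e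
     = - (\<Sum>m\<in>UNIV. Riem g x c a b m * T x m e) - (\<Sum>m\<in>UNIV. Riem g x c a e m * T x b m)"
proof -
  have ds: "pd c (pd a (\<lambda>y. T y b e)) x = pd a (pd c (\<lambda>y. T y b e)) x" for c a b e
    by (rule schwarz[OF op T xU])
  show ?thesis
    using ricci_alg[where ddt="\<lambda>c a b e. pd c (pd a (\<lambda>y. T y b e)) x" and G="\<lambda>a b k. Chr g x a b k"
       and dt="\<lambda>c b e. pd c (\<lambda>y. T y b e) x" and t="\<lambda>b e. T x b e" and dG="\<lambda>c a b k. pd c (\<lambda>y. Chr g y a b k) x", OF Gs ds]
    unfolding cov03_def pd_cov02[OF T] unfolding cov02_def Riem_def by simp
qed

end

lemma codazzi_alg:
  fixes p :: "'n::finite \<Rightarrow> 'n \<Rightarrow> real" and dp :: "'n \<Rightarrow> 'n \<Rightarrow> 'n \<Rightarrow> real"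
    and dq :: "'n \<Rightarrow> real" and ddq :: "'n \<Rightarrow> 'n \<Rightarrow> real" and G :: "'n \<Rightarrow> 'n \<Rightarrow> 'n \<Rightarrow> real"
    and P :: "'n \<Rightarrow> 'n \<Rightarrow> 'n \<Rightarrow> real" and C :: real
  assumes Gs: "\<And>a b k. G a b k = G b a k" and ds: "\<And>c b. ddq c b = ddq b c"
    and Ps: "\<And>c a e. P c a e = P a c e"
    and dpP: "\<And>c a e. dp c a e = P c a e + (\<Sum>k\<in>UNIV. G c a k * p k e) + (\<Sum>k\<in>UNIV. G c e k * p a k)"
  defines "h \<equiv> \<lambda>a b e. C * (p a e * dq b - p b e * dq a)"
  defines "dh \<equiv> \<lambda>c a b e. C * (dp c a e * dq b + p a e * ddq c b - (dp c b e * dq a + p b e * ddq c a))"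
  defines "H \<equiv> \<lambda>c a b e. dh c a b e - (\<Sum>k\<in>UNIV. G c a k * h k b e) - (\<Sum>k\<in>UNIV. G c b k * h a k e)
     - (\<Sum>k\<in>UNIV. G c e k * h a b k)"
  shows "H c a b e + H a b c e + H b c a e = 0"
  unfolding H_def dh_def h_def dpP
  apply (simp add: sum_subtractf sum.distrib sum_distrib_left sum_distrib_right algebra_simps)
  apply (simp add: Gs Ps ds algebra_simps)
  done

context
  fixes U :: "(real^'n::finite) set" and g :: "real^'n \<Rightarrow> 'n \<Rightarrow> 'n \<Rightarrow> real" and x :: "real^'n"
  assumes rm: "riemannian_metric U g" and xU: "x \<in> U"
begin

lemma chr_lower: "(\<Sum>k\<in>UNIV. Chr g x a b k * g x k e)
   = 1/2 * (pd a (\<lambda>y. g y b e) x + pd b (\<lambda>y. g y a e) x - pd e (\<lambda>y. g y a b) x)"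
proof -
  have "(\<Sum>k\<in>UNIV. Chr g x a b k * g x k e)
     = (\<Sum>k\<in>UNIV. \<Sum>l\<in>UNIV. 1/2 * (g x e k * ginv g x k l) *
         (pd a (\<lambda>y. g y b l) x + pd b (\<lambda>y. g y a l) x - pd l (\<lambda>y. g y a b) x))"
    unfolding Chr_def using rm_sym[OF rm xU]
    by (simp add: sum_distrib_left sum_distrib_right algebra_simps)
  also have "\<dots> = (\<Sum>l\<in>UNIV. 1/2 * (\<Sum>k\<in>UNIV. g x e k * ginv g x k l) *
         (pd a (\<lambda>y. g y b l) x + pd b (\<lambda>y. g y a l) x - pd l (\<lambda>y. g y a b) x))"
    by (subst sum.swap) (simp add: sum_distrib_left sum_distrib_right)
  also have "\<dots> = (\<Sum>l\<in>UNIV. if e = l then 1/2 *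
         (pd a (\<lambda>y. g y b l) x + pd b (\<lambda>y. g y a l) x - pd l (\<lambda>y. g y a b) x) else 0)"
    by (rule sum.cong) (auto simp: ginv_right[OF rm xU])
  also have "\<dots> = 1/2 * (pd a (\<lambda>y. g y b e) x + pd b (\<lambda>y. g y a e) x - pd e (\<lambda>y. g y a b) x)"
    by simp
  finally show ?thesis .
qed

lemma metric_compat: "cov02 g g x c a e = 0"
proof -
  have s: "pd l (\<lambda>y. g y i j) x = pd l (\<lambda>y. g y j i) x" for l i j
    by (rule pd_local[OF rm_open[OF rm] xU]) (use rm_sym[OF rm] in auto)
  have "(\<Sum>k\<in>UNIV. Chr g x c e k * g x a k) = (\<Sum>k\<in>UNIV. Chr g x c e k * g x k a)"
    using rm_sym[OF rm xU] by simp
  then show ?thesis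
    unfolding cov02_def using chr_lower[of c a e] chr_lower[of c e a] s[of c e a] s[of a c e] s[of e c a]
    by (simp add: algebra_simps)
qed

lemma cov03_local:
  assumes "\<And>y a b e. y \<in> U \<Longrightarrow> E y a b e = F y a b e"
  shows "cov03 g E x c a b e = cov03 g F x c a b e"
proof -
  have "pd c (\<lambda>y. E y a b e) x = pd c (\<lambda>y. F y a b e) x"
    by (rule pd_local[OF op[OF rm xU] xU]) (use assms in auto)
  then show ?thesis unfolding cov03_def using assms[OF xU] by simp
qed

lemma cov03_diff:
  assumes "\<And>a b e. gen U (\<lambda>y. E y a b e)"
  shows "cov03 g E x c a b e - cov03 g E x c b a e = cov03 g (\<lambda>y a b e. E y a b e - E y b a e) x c a b e"
  unfolding cov03_def using assms
  by (simp add: pd_simps[OF rm xU] dx[OF rm xU] sum_subtractf algebra_simps right_diff_distrib)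

lemma codazzi_cyc:
  fixes p :: "real^'n \<Rightarrow> 'n \<Rightarrow> 'n \<Rightarrow> real" and q :: "real^'n \<Rightarrow> real" and C :: real
  assumes pg: "\<And>i j. gen U (\<lambda>y. p y i j)" and qg: "gen U q"
    and cod: "\<And>c a e. cov02 g p x c a e = cov02 g p x a c e"
  defines "h \<equiv> \<lambda>y a b e. C * (p y a e * pd b q y - p y b e * pd a q y)"
  shows "cov03 g h x c a b e + cov03 g h x a b c e + cov03 g h x b c a e = 0"
proof -
  have ds: "pd c (pd b q) x = pd b (pd c q) x" for c b
    by (rule schwarz[OF op[OF rm xU] qg xU])
  have dpP: "pd c (\<lambda>y. p y a e) x = cov02 g p x c a e + (\<Sum>k\<in>UNIV. Chr g x c a k * p x k e) + (\<Sum>k\<in>UNIV. Chr g x c e k * p x a k)" for c a e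
    unfolding cov02_def by simp
  have pdh: "pd c (\<lambda>y. h y a b e) x = C * (pd c (\<lambda>y. p y a e) x * pd b q x + p x a e * pd c (pd b q) x
      - (pd c (\<lambda>y. p y b e) x * pd a q x + p x b e * pd c (pd a q) x))" for c a b e
    unfolding h_def using pg qg
    by (simp add: pd_simps[OF rm xU] dx[OF rm xU] gen_pd[OF op[OF rm xU]] algebra_simps)
  show ?thesis
    using codazzi_alg[where G="\<lambda>a b k. Chr g x a b k" and ddq="\<lambda>c b. pd c (pd b q) x"
       and P="\<lambda>c a e. cov02 g p x c a e" and dp="\<lambda>c a e. pd c (\<lambda>y. p y a e) x" and p="\<lambda>a e. p x a e"
       and dq="\<lambda>b. pd b q x" and C=C, OF Gs[OF rm xU] ds cod dpP]
    unfolding cov03_def pdh unfolding h_def by simp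
qed

end

lemma Riem_anti0: "Riem g y a b c d + Riem g y b a c d = 0"
  unfolding Riem_def by (simp add: algebra_simps)

context
  fixes U :: "(real^'n::finite) set" and g :: "real^'n \<Rightarrow> 'n \<Rightarrow> 'n \<Rightarrow> real" and x :: "real^'n"
  assumes rm: "riemannian_metric U g" and xU: "x \<in> U"
begin

lemma PA: "(\<Sum>m\<in>UNIV. Ricci g x i m * Riem g x j k l m) + (\<Sum>m\<in>UNIV. Ricci g x i m * Riem g x k j l m) = 0"
proof -
  have "(\<Sum>m\<in>UNIV. Ricci g x i m * Riem g x j k l m) + (\<Sum>m\<in>UNIV. Ricci g x i m * Riem g x k j l m)
     = (\<Sum>m\<in>UNIV. Ricci g x i m * (Riem g x j k l m + Riem g x k j l m))"
    by (simp add: sum.distrib distrib_left)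
  then show ?thesis by (simp add: Riem_anti0)
qed

lemma PB: "(\<Sum>m\<in>UNIV. Ricci g x i m * Riem g x j k l m) + (\<Sum>m\<in>UNIV. Ricci g x i m * Riem g x k l j m)
   + (\<Sum>m\<in>UNIV. Ricci g x i m * Riem g x l j k m) = 0"
proof -
  have "(\<Sum>m\<in>UNIV. Ricci g x i m * Riem g x j k l m) + (\<Sum>m\<in>UNIV. Ricci g x i m * Riem g x k l j m)
   + (\<Sum>m\<in>UNIV. Ricci g x i m * Riem g x l j k m)
     = (\<Sum>m\<in>UNIV. Ricci g x i m * (Riem g x j k l m + Riem g x k l j m + Riem g x l j k m))"
    by (simp add: sum.distrib distrib_left)
  then show ?thesis by (simp add: bianchi1[OF rm xU])
qed

lemma second_from_first:
  assumes S: "\<And>a b c e. (\<Sum>m\<in>UNIV. Ricci g x a m * Riem g x b c e m) + (\<Sum>m\<in>UNIV. Ricci g x b m * Riem g x c a e m)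
       + (\<Sum>m\<in>UNIV. Ricci g x c m * Riem g x a b e m) = 0"
  shows "(\<Sum>m\<in>UNIV. Ricci g x a m * Riem g x b e c m) - (\<Sum>m\<in>UNIV. Ricci g x b m * Riem g x a c e m)
       + (\<Sum>m\<in>UNIV. Ricci g x c m * Riem g x e b a m) - (\<Sum>m\<in>UNIV. Ricci g x e m * Riem g x c a b m) = 0"
  using PA[of a b e c] PA[of b a c e] PA[of c b e a] PA[of e a c b] PB[of a b c e] PB[of c a b e]
    S[of a b c e] S[of a c e b] by linarith

lemma first_id:
  defines "D \<equiv> cov02 g (Ricci g)"
  assumes cyc: "\<And>a b c e. cov03 g (\<lambda>y a b e. D y a b e - D y b a e) x c a b e
      + cov03 g (\<lambda>y a b e. D y a b e - D y b a e) x a b c e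
      + cov03 g (\<lambda>y a b e. D y a b e - D y b a e) x b c a e = 0"
  shows "(\<Sum>m\<in>UNIV. Ricci g x a m * Riem g x b c e m) + (\<Sum>m\<in>UNIV. Ricci g x b m * Riem g x c a e m)
       + (\<Sum>m\<in>UNIV. Ricci g x c m * Riem g x a b e m) = 0"
proof -
  have T: "\<And>i j. gen U (\<lambda>y. Ricci g y i j)" using gen_Ricci[OF rm] .
  have DG: "\<And>a b e. gen U (\<lambda>y. D y a b e)" unfolding D_def by (rule gen_cov02[OF rm xU T])
  note r = ricci_id[where T="Ricci g", OF rm xU T, folded D_def]
  note l = cov03_diff[where E=D, OF rm xU DG]
  have bi: "Riem g x c a b m = - Riem g x a b c m - Riem g x b c a m" for m
    using bianchi1[OF rm xU, of a b c m] by linarith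
  have b1: "(\<Sum>m\<in>UNIV. Riem g x c a b m * Ricci g x m e) = - (\<Sum>m\<in>UNIV. Riem g x a b c m * Ricci g x m e)
      - (\<Sum>m\<in>UNIV. Riem g x b c a m * Ricci g x m e)"
    by (simp add: bi sum_subtractf sum_negf algebra_simps)
  have cm: "(\<Sum>m\<in>UNIV. Riem g x i j k m * Ricci g x l m) = (\<Sum>m\<in>UNIV. Ricci g x l m * Riem g x i j k m)" for i j k l
    by (simp add: mult.commute)
  show ?thesis
    using r[where c=c and a=a and b=b and e=e] r[where c=a and a=b and b=c and e=e] r[where c=b and a=c and b=a and e=e]
      l[where c=c and a=a and b=b and e=e] l[where c=a and a=b and b=c and e=e] l[where c=b and a=c and b=a and e=e] cyc[of c a b e]
      b1 cm[of c a e b] cm[of a b e c] cm[of b c e a]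
    by linarith
qed

end

theorem mainTheorem7:
  fixes U :: "(real^'n::finite) set" and g :: "real^'n \<Rightarrow> 'n \<Rightarrow> 'n \<Rightarrow> real"
  assumes "riemannian_metric U g"
    and "nearly_conformally_symmetric U g \<or>
         (\<exists>(K :: real^'n \<Rightarrow> 'n \<Rightarrow> 'n \<Rightarrow> 'n \<Rightarrow> 'n \<Rightarrow> real) (A::real) (B::real)
             (\<phi> :: real^'n \<Rightarrow> real) (t :: real^'n \<Rightarrow> 'n \<Rightarrow> 'n \<Rightarrow> real).
            (\<forall>b c e d. smooth_on U (\<lambda>x. K x b c e d)) \<and> A \<noteq> 0 \<and> B \<noteq> 0 \<and>
            smooth_on U \<phi> \<and> codazzi U g t \<and>
            (\<forall>x\<in>U. \<forall>b c e. div13 g K x b c e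
                 = A * div13 g (Riem g) x b c e + B * (t x b e * pd c \<phi> x - t x c e * pd b \<phi> x)) \<and>
            (\<forall>x\<in>U. \<forall>b c e. div13 g K x b c e = 0))"
  shows "\<forall>x\<in>U. \<forall>a b c e.
     (\<Sum>m\<in>UNIV. Ricci g x a m * Riem g x b c e m) + (\<Sum>m\<in>UNIV. Ricci g x b m * Riem g x c a e m)
       + (\<Sum>m\<in>UNIV. Ricci g x c m * Riem g x a b e m) = 0
   \<and> (\<Sum>m\<in>UNIV. Ricci g x a m * Riem g x b e c m) - (\<Sum>m\<in>UNIV. Ricci g x b m * Riem g x a c e m)
       + (\<Sum>m\<in>UNIV. Ricci g x c m * Riem g x e b a m) - (\<Sum>m\<in>UNIV. Ricci g x e m * Riem g x c a b m) = 0"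
proof (intro ballI allI)
  fix x a b c e assume xU: "x \<in> U"
  note rm = assms(1)
  define D where "D = cov02 g (Ricci g)"
  have cyc: "cov03 g (\<lambda>y a b e. D y a b e - D y b a e) x c a b e
      + cov03 g (\<lambda>y a b e. D y a b e - D y b a e) x a b c e
      + cov03 g (\<lambda>y a b e. D y a b e - D y b a e) x b c a e = 0" for a b c e
    using assms(2)
  proof
    assume ncs: "nearly_conformally_symmetric U g"
    define k where "k = 1 / (2 * (real CARD('n) - 1))"
    define h where "h = (\<lambda>y a b e. (- k) * (g y a e * pd b (scal g) y - g y b e * pd a (scal g) y))"
    have eq: "D y a b e - D y b a e = h y a b e" if "y \<in> U" for y a b e
      using ncs that unfolding nearly_conformally_symmetric_def D_def h_def k_def by (simp add: algebra_simps)
    have "cov03 g (\<lambda>y a b e. D y a b e - D y b a e) x i j l m = cov03 g h x i j l m" for i j l m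
      by (rule cov03_local[OF rm xU]) (rule eq)
    moreover have "cov03 g h x c a b e + cov03 g h x a b c e + cov03 g h x b c a e = 0"
      unfolding h_def
      by (rule codazzi_cyc[OF rm xU rm_gen[OF rm] gen_scal[OF rm]]) (simp add: metric_compat[OF rm xU])
    ultimately show ?thesis by simp
  next
    assume "\<exists>(K :: real^'n \<Rightarrow> 'n \<Rightarrow> 'n \<Rightarrow> 'n \<Rightarrow> 'n \<Rightarrow> real) (A::real) (B::real)
             (\<phi> :: real^'n \<Rightarrow> real) (t :: real^'n \<Rightarrow> 'n \<Rightarrow> 'n \<Rightarrow> real).
            (\<forall>b c e d. smooth_on U (\<lambda>x. K x b c e d)) \<and> A \<noteq> 0 \<and> B \<noteq> 0 \<and>
            smooth_on U \<phi> \<and> codazzi U g t \<and>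
            (\<forall>x\<in>U. \<forall>b c e. div13 g K x b c e
                 = A * div13 g (Riem g) x b c e + B * (t x b e * pd c \<phi> x - t x c e * pd b \<phi> x)) \<and>
            (\<forall>x\<in>U. \<forall>b c e. div13 g K x b c e = 0)"
    then obtain K A B \<phi> t where A: "A \<noteq> 0" and \<phi>: "smooth_on U \<phi>" and cod: "codazzi U g t"
      and hK: "\<forall>x\<in>U. \<forall>b c e. div13 g K x b c e
                 = A * div13 g (Riem g) x b c e + B * (t x b e * pd c \<phi> x - t x c e * pd b \<phi> x)"
      and K0: "\<forall>x\<in>U. \<forall>b c e. div13 g K x b c e = 0"
      by blast
    define h where "h = (\<lambda>y a b e. (B / A) * (t y a e * pd b \<phi> y - t y b e * pd a \<phi> y))"
    have eq: "D y a b e - D y b a e = h y a b e" if "y \<in> U" for y a b e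
    proof -
      have "0 = A * (D y b a e - D y a b e) + B * (t y a e * pd b \<phi> y - t y b e * pd a \<phi> y)"
        using hK[rule_format, OF that, of a b e] K0[rule_format, OF that, of a b e] div_formula[OF rm that, of a b e]
        unfolding D_def by simp
      then show ?thesis unfolding h_def using A by (simp add: field_simps)
    qed
    have "cov03 g (\<lambda>y a b e. D y a b e - D y b a e) x i j l m = cov03 g h x i j l m" for i j l m
      by (rule cov03_local[OF rm xU]) (rule eq)
    moreover have "cov03 g h x c a b e + cov03 g h x a b c e + cov03 g h x b c a e = 0"
      unfolding h_def
      using cod unfolding codazzi_def
      by (intro codazzi_cyc[OF rm xU]) (use xU in \<open>auto intro: gbase \<phi>\<close>)
    ultimately show ?thesis by simp
  qed
  have first: "(\<Sum>m\<in>UNIV. Ricci g x a m * Riem g x b c e m) + (\<Sum>m\<in>UNIV. Ricci g x b m * Riem g x c a e m)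
       + (\<Sum>m\<in>UNIV. Ricci g x c m * Riem g x a b e m) = 0" for a b c e
    by (rule first_id[OF rm xU]) (use cyc in \<open>simp add: D_def\<close>)
  show "(\<Sum>m\<in>UNIV. Ricci g x a m * Riem g x b c e m) + (\<Sum>m\<in>UNIV. Ricci g x b m * Riem g x c a e m)
       + (\<Sum>m\<in>UNIV. Ricci g x c m * Riem g x a b e m) = 0
   \<and> (\<Sum>m\<in>UNIV. Ricci g x a m * Riem g x b e c m) - (\<Sum>m\<in>UNIV. Ricci g x b m * Riem g x a c e m)
       + (\<Sum>m\<in>UNIV. Ricci g x c m * Riem g x e b a m) - (\<Sum>m\<in>UNIV. Ricci g x e m * Riem g x c a b m) = 0"
    using first second_from_first[OF rm xU first] by blast
qed

end
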